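(* Let $X$ be a Polish space, $G$ a Lie group, $\nu$ a left-invariant Haar measure on $G$, and let $G$ act on $X\times G$ by $g.(x,h)=(x,gh)$. Let $Z\subset X\times G$ be a non-empty open set and $m$ a Borel probability measure on $Z$. Let $p_1:X\times G\to X$ be the projection, $m_1=(p_1)_*m$, and for $x\in p_1(Z)$ write $Z_x=\{x\}\times U_x$ with $U_x\subset G$ open. Let $(m_x)_{x\in p_1(Z)}$ be a system of conditional measures, i.e. each $m_x$ is a Borel probability measure on $U_x$, and for every Borel $B\subset Z$ the function $x\mapsto m_x(\{h:(x,h)\in B\})$ is $m_1$-measurable and $m(B)=\int m_x(\{h:(x,h)\in B\})\,dm_1(x)$. Assume that $m$ is invariant: for every measurable $W\subset Z$ and $g\in G$ with $g.W\subset Z$, $m(g.W)=m(W)$. Then for $m_1$-almost every $x$, the open set $U_x$ has finite Haar measure and $$ m_x=\frac{1}{\nu(U_x)}\,\nu|_{U_x}.$$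
   Context: A Polish space is a topological space homeomorphic to a separable complete metric space. *)

theory Defs
  imports "HOL-Analysis.Analysis" "HOL-Probability.Probability_Measure"
begin

text \<open>A Lie group is rendered as a (Hausdorff, second countable) topological group
  (written additively, not necessarily commutative) which is locally Euclidean:
  every point has an open neighbourhood homeomorphic to an open subset of some R^n.
  By Gleason--Montgomery--Zippin such a group carries a unique Lie group structure.\<close>
definition locally_euclidean_group :: "'g::topological_group_add itself \<Rightarrow> bool" where
  "locally_euclidean_group _ \<longleftrightarrow>
     (\<forall>g::'g. \<exists>U n V. open U \<and> g \<in> U \<and> openin (Euclidean_space n) V \<and>
        (top_of_set U) homeomorphic_space (subtopology (Euclidean_space n) V))"

definition left_haar_measure :: "'g::topological_group_add measure \<Rightarrow> bool" where
  "left_haar_measure \<nu> \<longleftrightarrow>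
     sets \<nu> = sets borel \<and>
     (\<forall>K. compact K \<longrightarrow> emeasure \<nu> K < \<infinity>) \<and>
     (\<forall>U. open U \<and> U \<noteq> {} \<longrightarrow> emeasure \<nu> U > 0) \<and>
     (\<forall>g A. A \<in> sets borel \<longrightarrow> emeasure \<nu> ((\<lambda>h. g + h) ` A) = emeasure \<nu> A)"

definition act :: "'g::group_add \<Rightarrow> 'x \<times> 'g \<Rightarrow> 'x \<times> 'g" where
  "act g p = (fst p, g + snd p)"

definition fibre :: "('x \<times> 'g) set \<Rightarrow> 'x \<Rightarrow> 'g set" where
  "fibre Z x = {h. (x, h) \<in> Z}"

end

theory Submission
  imports Defs
begin


lemma lc_point:
  fixes g :: "'g::{topological_group_add, t2_space, second_countable_topology}"
  assumes lie: "locally_euclidean_group TYPE('g)"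
  shows "\<exists>V K. open V \<and> compact K \<and> g \<in> V \<and> V \<subseteq> K"
proof -
  obtain U n V where U: "open U" "g \<in> U" and V: "openin (Euclidean_space n) V"
    and hom: "(top_of_set U) homeomorphic_space (subtopology (Euclidean_space n) V)"
    using lie unfolding locally_euclidean_group_def by blast
  have "locally_compact_space (subtopology (Euclidean_space n) V)"
    by (rule locally_compact_space_open_subset) (use Hausdorff_Euclidean_space locally_compact_Euclidean_space V in auto)
  then have "locally_compact_space (top_of_set U)"
    using hom homeomorphic_locally_compact_space by blast
  then obtain V' K where "openin (top_of_set U) V'" "compactin (top_of_set U) K" "g \<in> V'" "V' \<subseteq> K"
    using U unfolding locally_compact_space_def by force
  then show ?thesis
    using U by (metis compactin_euclidean_iff compactin_subtopology openin_open_trans)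
qed

lemma haus_euc: "Hausdorff_space (euclidean :: 'a::t2_space topology)"
  unfolding Hausdorff_space_def disjnt_def by (auto dest!: hausdorff)

lemma regular_point:
  fixes g :: "'g::{topological_group_add, t2_space, second_countable_topology}"
  assumes lie: "locally_euclidean_group TYPE('g)" and "open S0" "g \<in> S0"
  shows "\<exists>W. open W \<and> g \<in> W \<and> closure W \<subseteq> S0 \<and> compact (closure W)"
proof -
  have lc: "locally_compact_space (euclidean :: 'g topology)"
    unfolding locally_compact_space_def using lc_point[OF lie] by auto
  have reg: "regular_space (euclidean :: 'g topology)"
    by (rule locally_compact_Hausdorff_imp_regular_space[OF lc]) (rule haus_euc)
  obtain V K where VK: "open V" "compact K" "g \<in> V" "V \<subseteq> K" using lc_point[OF lie] by blast
  have "closedin euclidean (- (S0 \<inter> V))" using assms VK by auto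
  moreover have "g \<in> topspace euclidean - (- (S0 \<inter> V))" using assms VK by auto
  ultimately obtain U1 V1 where "openin euclidean U1" "openin euclidean V1" "g \<in> U1" "- (S0 \<inter> V) \<subseteq> V1" "disjnt U1 V1"
    using reg[unfolded regular_space_def, rule_format, of "- (S0 \<inter> V)" g] by blast
  then have o: "open U1" "open V1" and d: "U1 \<inter> V1 = {}" by (auto simp: disjnt_def)
  have "closure U1 \<subseteq> - V1"
    by (rule closure_minimal) (use d o in auto)
  then have c1: "closure U1 \<subseteq> S0 \<inter> V" using \<open>- (S0 \<inter> V) \<subseteq> V1\<close> by blast
  have e: "closure U1 = K \<inter> closure U1" using c1 VK by auto
  have "compact (closure U1)"
    by (subst e) (rule compact_Int_closed[OF VK(2) closed_closure])
  then show ?thesis using c1 o(1) \<open>g \<in> U1\<close> by (intro exI[of _ U1]) simp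
qed

lemma good_basis:
  fixes dummy :: "'g::{topological_group_add, t2_space, second_countable_topology}"
  assumes lie: "locally_euclidean_group TYPE('g)"
  shows "\<exists>\<B>::'g set set. countable \<B> \<and> (\<forall>b\<in>\<B>. open b \<and> b \<noteq> {} \<and> compact (closure b)) \<and>
     (\<forall>S0 p. open S0 \<and> p \<in> S0 \<longrightarrow> (\<exists>b\<in>\<B>. p \<in> b \<and> closure b \<subseteq> S0))"
proof -
  obtain B :: "'g set set" where B: "countable B" "topological_basis B" using ex_countable_basis by blast
  define \<B> where "\<B> = {b\<in>B. b \<noteq> {} \<and> compact (closure b)}"
  have "countable \<B>" using B(1) unfolding \<B>_def by (rule countable_subset[rotated]) blast
  moreover have "\<forall>b\<in>\<B>. open b \<and> b \<noteq> {} \<and> compact (closure b)"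
    using topological_basis_open[OF B(2)] unfolding \<B>_def by simp
  moreover have "\<exists>b\<in>\<B>. p \<in> b \<and> closure b \<subseteq> S0" if "open S0" "p \<in> S0" for S0 p
  proof -
    obtain W where W: "open W" "p \<in> W" "closure W \<subseteq> S0" "compact (closure W)"
      using regular_point[OF lie \<open>open S0\<close> \<open>p \<in> S0\<close>] by blast
    obtain b where b: "b \<in> B" "p \<in> b" "b \<subseteq> W" using topological_basisE[OF B(2) W(1,2)] by blast
    have "closure b \<subseteq> closure W" using b closure_mono by blast
    then have e: "closure b = closure W \<inter> closure b" by auto
    have "compact (closure b)"
      by (subst e) (rule compact_Int_closed[OF W(4) closed_closure])
    have "closure b \<subseteq> S0" using W(3) \<open>closure b \<subseteq> closure W\<close> by (rule order_trans[rotated])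
    moreover have "b \<in> \<B>" using b \<open>compact (closure b)\<close> unfolding \<B>_def by auto
    ultimately show ?thesis using b(2) by blast
  qed
  ultimately show ?thesis by (intro exI[of _ \<B>]) simp
qed


lemma cont_vimage_borel: "continuous_on UNIV f \<Longrightarrow> A \<in> sets borel \<Longrightarrow> f -` A \<in> sets borel"
  using measurable_sets[OF borel_measurable_continuous_onI] by (metis inf_top.right_neutral space_borel)

lemma transl_image: "(\<lambda>z. h + z) ` S = {y. -h + y \<in> (S::'a::group_add set)}"
proof (intro set_eqI iffI)
  fix y assume "y \<in> (\<lambda>z. h + z) ` S" then show "y \<in> {y. -h + y \<in> S}" by (auto simp: minus_add_cancel)
next
  fix y assume "y \<in> {y. -h + y \<in> S}" then show "y \<in> (\<lambda>z. h + z) ` S"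
    by (intro image_eqI[of _ _ "-h + y"]) (auto simp: add_minus_cancel)
qed

lemma borel_pair_sets:
  fixes M :: "'a::second_countable_topology measure" and N :: "'b::second_countable_topology measure"
  assumes "sets M = sets borel" "sets N = sets borel"
  shows "sets (M \<Otimes>\<^sub>M N) = sets (borel :: ('a \<times> 'b) measure)"
  using assms by (metis borel_prod sets_pair_measure_cong)

locale hs =
  fixes \<nu> :: "'g::{topological_group_add, t2_space, second_countable_topology} measure"
  assumes lie: "locally_euclidean_group TYPE('g)" and haar: "left_haar_measure \<nu>"
begin

lemma sets_nu[simp, measurable_cong]: "sets \<nu> = sets borel"
  using haar unfolding left_haar_measure_def by blast

lemma space_nu[simp]: "space \<nu> = UNIV"
  using sets_eq_imp_space_eq[OF sets_nu] by simp

lemma nu_compact: "compact K \<Longrightarrow> emeasure \<nu> K < \<infinity>"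
  using haar unfolding left_haar_measure_def by blast

lemma nu_open: "open U \<Longrightarrow> U \<noteq> {} \<Longrightarrow> emeasure \<nu> U > 0"
  using haar unfolding left_haar_measure_def by blast

lemma nu_transl: "S \<in> sets borel \<Longrightarrow> emeasure \<nu> {y. -h + y \<in> S} = emeasure \<nu> S"
  using haar unfolding left_haar_measure_def transl_image[symmetric] by blast

lemma sf_nu: "sigma_finite_measure \<nu>"
proof -
  obtain \<B> :: "'g set set" where B: "countable \<B>" "\<forall>b\<in>\<B>. open b \<and> b \<noteq> {} \<and> compact (closure b)"
     "\<forall>S0 p. open S0 \<and> p \<in> S0 \<longrightarrow> (\<exists>b\<in>\<B>. p \<in> b \<and> closure b \<subseteq> S0)"
    using good_basis[OF lie] by blast
  show ?thesis
  proof (unfold_locales, intro exI[of _ \<B>] conjI)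
    show "countable \<B>" by fact
    show "\<B> \<subseteq> sets \<nu>" using B(2) by auto
    show "\<Union> \<B> = space \<nu>"
    proof (rule set_eqI, rule iffI)
      fix p assume "p \<in> space \<nu>"
      then obtain b where "b \<in> \<B>" "p \<in> b" using B(3)[rule_format, of UNIV p] by auto
      then show "p \<in> \<Union> \<B>" by blast
    qed simp
    show "\<forall>a\<in>\<B>. emeasure \<nu> a \<noteq> \<infinity>"
    proof
      fix a assume a: "a \<in> \<B>"
      have "emeasure \<nu> a \<le> emeasure \<nu> (closure a)"
        by (rule emeasure_mono) (use closure_subset in auto)
      also have "\<dots> < \<infinity>" using nu_compact B(2) a by blast
      finally show "emeasure \<nu> a \<noteq> \<infinity>" by simp
    qed
  qed
qed

sublocale nu: sigma_finite_measure \<nu> by (rule sf_nu)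

lemma psf_nu: "pair_sigma_finite \<nu> \<nu>"
  by (simp add: pair_sigma_finite.intro sf_nu)

definition rho :: "'g set \<Rightarrow> 'g \<Rightarrow> ennreal" where
  "rho A h = emeasure \<nu> {y. y + h \<in> A}"


lemma rho_meas[measurable]: assumes "A \<in> sets borel" shows "rho A \<in> borel_measurable borel"
proof -
  have "{(h,y). y + h \<in> A} = (\<lambda>p. snd p + fst p) -` A" by auto
  also have "\<dots> \<in> sets (borel :: ('g \<times> 'g) measure)"
    by (rule cont_vimage_borel[OF _ assms]) (intro continuous_intros)
  moreover have e: "sets (borel \<Otimes>\<^sub>M \<nu>) = sets (borel :: ('g \<times> 'g) measure)"
    by (rule borel_pair_sets) simp_all
  ultimately have "{(h,y). y + h \<in> A} \<in> sets (borel \<Otimes>\<^sub>M \<nu>)"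
    unfolding e by simp
  from nu.measurable_emeasure_Pair[OF this] show ?thesis
    unfolding rho_def by (simp add: vimage_def)
qed

lemma rho_set_eq: "{y. y + h \<in> A} = (\<lambda>y. y + h) -` A" by auto

lemma rho_pos_fin:
  assumes "open A" "A \<noteq> {}" "compact (closure A)"
  shows "0 < rho A h" "rho A h < \<infinity>"
proof -
  have o: "open {y. y + h \<in> A}" unfolding rho_set_eq
    by (rule open_vimage[OF assms(1)]) (intro continuous_intros)
  obtain a where "a \<in> A" using assms(2) by blast
  then have "a + - h \<in> {y. y + h \<in> A}" by (simp add: add.assoc)
  then show "0 < rho A h" unfolding rho_def using nu_open[OF o] by blast
  have "{y. y + h \<in> A} \<subseteq> (\<lambda>y. y + - h) ` closure A"
  proof
    fix y assume "y \<in> {y. y + h \<in> A}"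
    then show "y \<in> (\<lambda>y. y + - h) ` closure A"
      by (intro image_eqI[of _ _ "y + h"]) (auto simp: add.assoc intro: closure_subset[THEN subsetD])
  qed
  moreover have c: "compact ((\<lambda>y. y + - h) ` closure A)"
    by (rule compact_continuous_image[OF _ assms(3)]) (intro continuous_intros)
  ultimately have "rho A h \<le> emeasure \<nu> ((\<lambda>y. y + - h) ` closure A)"
    unfolding rho_def using compact_imp_closed[OF c]
    by (intro emeasure_mono) (simp_all only: sets_nu borel_closed)
  also have "\<dots> < \<infinity>" using nu_compact c by blast
  finally show "rho A h < \<infinity>" .
qed

end


context hs begin

lemma weil_nu:
  assumes A: "A \<in> sets borel" and C: "C \<in> sets borel"
  shows "(\<integral>\<^sup>+h. indicator C h * rho A h \<partial>\<nu>) = emeasure \<nu> (uminus -` C) * emeasure \<nu> A"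
proof -
  interpret P: pair_sigma_finite \<nu> \<nu> by (rule psf_nu)
  have sp: "sets (\<nu> \<Otimes>\<^sub>M \<nu>) = sets (borel :: ('g \<times> 'g) measure)" by (rule borel_pair_sets) simp_all
  define E1 where "E1 = {(h,y). h \<in> C \<and> y + h \<in> A}"
  define E2 where "E2 = {(h::'g,y::'g). h \<in> A \<and> -y + h \<in> C}"
  have E1: "E1 \<in> sets (\<nu> \<Otimes>\<^sub>M \<nu>)"
  proof -
    have "E1 = fst -` C \<inter> (\<lambda>p. snd p + fst p) -` A" unfolding E1_def by auto
    moreover have "fst -` C \<in> sets (borel :: ('g \<times> 'g) measure)"
      by (rule cont_vimage_borel[OF _ C]) (intro continuous_intros)
    moreover have "(\<lambda>p. snd p + fst p) -` A \<in> sets (borel :: ('g \<times> 'g) measure)"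
      by (rule cont_vimage_borel[OF _ A]) (intro continuous_intros)
    ultimately show ?thesis unfolding sp by simp
  qed
  have E2: "E2 \<in> sets (\<nu> \<Otimes>\<^sub>M \<nu>)"
  proof -
    have "E2 = fst -` A \<inter> (\<lambda>p. - snd p + fst p) -` C" unfolding E2_def by auto
    moreover have "fst -` A \<in> sets (borel :: ('g \<times> 'g) measure)"
      by (rule cont_vimage_borel[OF _ A]) (intro continuous_intros)
    moreover have "(\<lambda>p. - snd p + fst p) -` C \<in> sets (borel :: ('g \<times> 'g) measure)"
      by (rule cont_vimage_borel[OF _ C]) (intro continuous_intros)
    ultimately show ?thesis unfolding sp by simp
  qed
  have "emeasure (\<nu> \<Otimes>\<^sub>M \<nu>) E1 = (\<integral>\<^sup>+h. emeasure \<nu> (Pair h -` E1) \<partial>\<nu>)"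
    by (rule nu.emeasure_pair_measure_alt[OF E1])
  also have "\<dots> = (\<integral>\<^sup>+h. indicator C h * rho A h \<partial>\<nu>)"
    by (rule nn_integral_cong) (simp add: E1_def rho_def indicator_def vimage_def)
  finally have 1: "emeasure (\<nu> \<Otimes>\<^sub>M \<nu>) E1 = (\<integral>\<^sup>+h. indicator C h * rho A h \<partial>\<nu>)" .
  have "emeasure (\<nu> \<Otimes>\<^sub>M \<nu>) E1 = (\<integral>\<^sup>+y. emeasure \<nu> ((\<lambda>h. (h, y)) -` E1) \<partial>\<nu>)"
    by (rule P.emeasure_pair_measure_alt2[OF E1])
  also have "\<dots> = (\<integral>\<^sup>+y. emeasure \<nu> ((\<lambda>h. (h, y)) -` E2) \<partial>\<nu>)"
  proof (rule nn_integral_cong)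
    fix y
    have eq1: "(\<lambda>h. (h, y)) -` E1 = C \<inter> (\<lambda>h. y + h) -` A" unfolding E1_def by auto
    have b: "C \<inter> (\<lambda>h. y + h) -` A \<in> sets borel"
    proof -
      have "continuous_on UNIV (\<lambda>h. y + h)" by (intro continuous_intros)
      then show ?thesis using cont_vimage_borel[OF _ A, of "\<lambda>h. y + h"] C by auto
    qed
    have "emeasure \<nu> ((\<lambda>h. (h, y)) -` E1) = emeasure \<nu> {h'. -y + h' \<in> (\<lambda>h. (h, y)) -` E1}"
      unfolding eq1 by (rule nu_transl[OF b, symmetric])
    also have "{h'. -y + h' \<in> (\<lambda>h. (h, y)) -` E1} = (\<lambda>h. (h, y)) -` E2"
      unfolding E1_def E2_def by (auto simp: add_minus_cancel)
    finally show "emeasure \<nu> ((\<lambda>h. (h, y)) -` E1) = emeasure \<nu> ((\<lambda>h. (h, y)) -` E2)" .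
  qed
  also have "\<dots> = emeasure (\<nu> \<Otimes>\<^sub>M \<nu>) E2"
    by (rule P.emeasure_pair_measure_alt2[OF E2, symmetric])
  also have "\<dots> = (\<integral>\<^sup>+h. emeasure \<nu> (Pair h -` E2) \<partial>\<nu>)"
    by (rule nu.emeasure_pair_measure_alt[OF E2])
  also have "\<dots> = (\<integral>\<^sup>+h. emeasure \<nu> (uminus -` C) * indicator A h \<partial>\<nu>)"
  proof (rule nn_integral_cong)
    fix h
    have uC: "uminus -` C \<in> sets borel"
      by (rule cont_vimage_borel[OF _ C]) (intro continuous_intros)
    have "{y. -y + h \<in> C} = {y. -h + y \<in> uminus -` C}" by (auto simp: minus_add)
    then have "emeasure \<nu> {y. -y + h \<in> C} = emeasure \<nu> (uminus -` C)"
      using nu_transl[OF uC] by simp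
    then show "emeasure \<nu> (Pair h -` E2) = emeasure \<nu> (uminus -` C) * indicator A h"
      unfolding E2_def by (simp add: indicator_def vimage_def)
  qed
  also have "\<dots> = emeasure \<nu> (uminus -` C) * emeasure \<nu> A"
    using A by (simp add: nn_integral_cmult_indicator)
  finally show ?thesis using 1 by simp
qed

end


context hs begin

lemma nu_neg_fin: assumes "compact (closure C)" shows "emeasure \<nu> (uminus -` C) < \<infinity>"
proof -
  have c: "compact (uminus ` closure C)"
    by (rule compact_continuous_image[OF _ assms]) (intro continuous_intros)
  have "uminus -` C \<subseteq> uminus ` closure C"
  proof
    fix y assume "y \<in> uminus -` C"
    then show "y \<in> uminus ` closure C"
      by (intro image_eqI[of _ _ "- y"]) (auto intro: closure_subset[THEN subsetD])
  qed
  then have "emeasure \<nu> (uminus -` C) \<le> emeasure \<nu> (uminus ` closure C)"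
    using compact_imp_closed[OF c] by (intro emeasure_mono) (simp_all only: sets_nu borel_closed)
  also have "\<dots> < \<infinity>" using nu_compact c by blast
  finally show ?thesis .
qed

lemma rdiv: fixes r x :: ennreal assumes "r \<noteq> 0" "r < \<infinity>" shows "r * (x / r) = x"
  using assms by (simp add: ennreal_times_divide mult.commute[of r] mult_divide_eq_ennreal)

lemma pw:
  fixes U :: "'g set" and \<mu> :: "'g measure" and \<B> \<P> :: "'g set set"
  assumes B: "countable \<B>" "\<forall>b\<in>\<B>. open b \<and> b \<noteq> {} \<and> compact (closure b)"
     "\<forall>S0 p. open S0 \<and> p \<in> S0 \<longrightarrow> (\<exists>b\<in>\<B>. p \<in> b \<and> closure b \<subseteq> S0)"
    and P: "\<B> \<subseteq> \<P>" "\<forall>C\<in>\<P>. C \<in> sets borel \<and> compact (closure C)"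
       "\<forall>C D. C \<in> \<P> \<longrightarrow> D \<in> \<P> \<longrightarrow> C \<inter> D \<in> \<P>"
    and U: "open U" "U \<noteq> {}"
    and mu: "sets \<mu> = sets (restrict_space borel U)" "prob_space \<mu>"
    and key: "\<forall>A\<in>\<B>. \<forall>C\<in>\<P>. closure A \<subseteq> U \<longrightarrow> closure C \<subseteq> U \<longrightarrow>
        (\<integral>\<^sup>+h. indicator C h * rho A h \<partial>\<mu>) = emeasure \<nu> (uminus -` C) * emeasure \<mu> A"
  shows "emeasure \<nu> U < \<infinity> \<and> \<mu> = scale_measure (1 / emeasure \<nu> U) (restrict_space \<nu> U)"
proof -
  interpret mu: prob_space \<mu> by (rule mu(2))
  have Ub: "U \<in> sets borel" using U by auto
  have space_mu: "space \<mu> = U"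
    using sets_eq_imp_space_eq[OF mu(1)] Ub by simp
  have sets_mu: "S \<in> sets \<mu> \<longleftrightarrow> S \<subseteq> U \<and> S \<in> sets borel" for S
    unfolding mu(1) using Ub by (simp add: sets_restrict_space_iff)
  obtain p where "p \<in> U" using U by blast
  then obtain A where A: "A \<in> \<B>" "closure A \<subseteq> U" using B(3) U(1) by blast
  have Aprops: "open A" "A \<noteq> {}" "compact (closure A)" using A B(2) by auto
  have AU: "A \<subseteq> U" using A(2) closure_subset by blast
  have Ab: "A \<in> sets borel" using Aprops by auto
  define nA where "nA = emeasure \<nu> A"
  have nA_pos: "nA \<noteq> 0" unfolding nA_def using nu_open[OF Aprops(1,2)] by simp
  have "nA \<le> emeasure \<nu> (closure A)" unfolding nA_def
    using compact_imp_closed[OF Aprops(3)] closure_subset[of A]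
    by (intro emeasure_mono) (simp_all only: sets_nu borel_closed)
  then have nA_fin: "nA < \<infinity>" using nu_compact[OF Aprops(3)] by simp
  define k where "k = emeasure \<mu> A / nA"
  have k_nA: "k * nA = emeasure \<mu> A"
    unfolding k_def using nA_pos nA_fin by (simp add: ennreal_divide_times rdiv)
  define mt where "mt = distr \<mu> borel (\<lambda>h. h)"
  have id_meas: "(\<lambda>h. h) \<in> measurable \<mu> borel"
    by (simp add: measurable_cong_sets[OF mu(1) refl] measurable_restrict_space1)
  have sets_mt[simp, measurable_cong]: "sets mt = sets borel" unfolding mt_def by simp
  have int_mt: "(\<integral>\<^sup>+h. f h \<partial>mt) = (\<integral>\<^sup>+h. f h \<partial>\<mu>)" if "f \<in> borel_measurable borel" for f
    unfolding mt_def by (rule nn_integral_distr[OF id_meas]) (use that in simp)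
  have rho_m: "rho A \<in> borel_measurable borel" using Ab by measurable
  have rho_pf: "0 < rho A h" "rho A h < \<infinity>" for h using rho_pos_fin[OF Aprops] by auto
  define M1 where "M1 = density mt (\<lambda>h. rho A h * indicator U h)"
  define M2 where "M2 = density \<nu> (\<lambda>h. k * rho A h * indicator U h)"
  define E where "E = {C\<in>\<P>. closure C \<subseteq> U} \<union> {D \<in> sets borel. D \<inter> U = {}}"
  have E_borel: "E \<subseteq> sets borel" unfolding E_def using P(2) by auto
  have M1C: "emeasure M1 C = emeasure \<nu> (uminus -` C) * emeasure \<mu> A" if "C \<in> \<P>" "closure C \<subseteq> U" for C
  proof -
    have Cb: "C \<in> sets borel" using P(2) that(1) by blast
    have CU: "C \<subseteq> U" using that(2) closure_subset by blast
    have "emeasure M1 C = (\<integral>\<^sup>+h. rho A h * indicator U h * indicator C h \<partial>mt)"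
      unfolding M1_def using Cb Ub rho_m by (subst emeasure_density) auto
    also have "\<dots> = (\<integral>\<^sup>+h. rho A h * indicator U h * indicator C h \<partial>\<mu>)"
      using Cb Ub rho_m by (subst int_mt) auto
    also have "\<dots> = (\<integral>\<^sup>+h. indicator C h * rho A h \<partial>\<mu>)"
      by (rule nn_integral_cong) (simp add: space_mu mult.commute)
    also have "\<dots> = emeasure \<nu> (uminus -` C) * emeasure \<mu> A"
      using key A that by blast
    finally show ?thesis .
  qed
  have M2C: "emeasure M2 C = emeasure \<nu> (uminus -` C) * emeasure \<mu> A" if "C \<in> \<P>" "closure C \<subseteq> U" for C
  proof -
    have Cb: "C \<in> sets borel" using P(2) that(1) by blast
    have CU: "C \<subseteq> U" using that(2) closure_subset by blast
    have "emeasure M2 C = (\<integral>\<^sup>+h. k * rho A h * indicator U h * indicator C h \<partial>\<nu>)"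
      unfolding M2_def using Cb Ub rho_m by (subst emeasure_density) auto
    also have "\<dots> = (\<integral>\<^sup>+h. k * (indicator C h * rho A h) \<partial>\<nu>)"
      using CU by (intro nn_integral_cong) (auto simp: indicator_def)
    also have "\<dots> = k * (\<integral>\<^sup>+h. indicator C h * rho A h \<partial>\<nu>)"
      using Cb rho_m by (subst nn_integral_cmult) auto
    also have "\<dots> = k * (emeasure \<nu> (uminus -` C) * nA)"
      unfolding nA_def by (simp add: weil_nu[OF Ab Cb])
    also have "\<dots> = (k * nA) * emeasure \<nu> (uminus -` C)" by (simp add: ac_simps)
    also have "\<dots> = emeasure \<nu> (uminus -` C) * emeasure \<mu> A"
      unfolding k_nA by (rule mult.commute)
    finally show ?thesis .
  qed
  have MD: "emeasure M1 D = 0 \<and> emeasure M2 D = 0" if "D \<in> sets borel" "D \<inter> U = {}" for D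
  proof -
    have z: "\<And>h. rho A h * indicator U h * indicator D h = (0::ennreal)"
      "\<And>h. k * rho A h * indicator U h * indicator D h = (0::ennreal)"
      using that(2) by (auto simp: indicator_def)
    show ?thesis unfolding M1_def M2_def using that(1) Ub rho_m
      by (simp add: emeasure_density z)
  qed
  have M12: "M1 = M2"
  proof (rule measure_eqI_generator_eq_countable[of E UNIV _ _ "{b\<in>\<B>. closure b \<subseteq> U} \<union> {- U}"])
    show "Int_stable E"
    proof (rule Int_stableI)
      fix a b assume ab: "a \<in> E" "b \<in> E"
      show "a \<inter> b \<in> E"
      proof (cases "a \<inter> U = {} \<or> b \<inter> U = {}")
        case True
        moreover have "a \<in> sets borel" "b \<in> sets borel" using ab E_borel by auto
        ultimately show ?thesis unfolding E_def by auto
      next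
        case False
        then have "a \<in> \<P>" "closure a \<subseteq> U" "b \<in> \<P>" "closure b \<subseteq> U" using ab unfolding E_def by auto
        moreover have "closure (a \<inter> b) \<subseteq> closure a" by (rule closure_mono) simp
        ultimately show ?thesis unfolding E_def using P(3) by blast
      qed
    qed
    show "E \<subseteq> Pow UNIV" by simp
    show "emeasure M1 X = emeasure M2 X" if "X \<in> E" for X
      using that unfolding E_def using M1C M2C MD by auto
    have gen: "sets borel = sigma_sets UNIV E"
    proof
      show "sigma_sets UNIV E \<subseteq> sets borel"
        using sets.sigma_sets_subset[OF E_borel] by simp
      show "sets borel \<subseteq> sigma_sets UNIV E"
        unfolding sets_borel
      proof (rule sigma_sets_mono, rule subsetI)
        fix S0 :: "'g set" assume "S0 \<in> {S. open S}"
        then have oS: "open S0" by simp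
        have e: "S0 = (S0 - U) \<union> \<Union>{b\<in>\<B>. closure b \<subseteq> S0 \<inter> U}"
        proof (rule set_eqI, rule iffI)
          fix x assume x: "x \<in> S0"
          show "x \<in> (S0 - U) \<union> \<Union>{b\<in>\<B>. closure b \<subseteq> S0 \<inter> U}"
          proof (cases "x \<in> U")
            case True
            then obtain b where "b \<in> \<B>" "x \<in> b" "closure b \<subseteq> S0 \<inter> U"
              using B(3) oS U(1) x by (meson IntI open_Int)
            then show ?thesis by blast
          qed (use x in blast)
        next
          fix x assume "x \<in> (S0 - U) \<union> \<Union>{b\<in>\<B>. closure b \<subseteq> S0 \<inter> U}"
          then show "x \<in> S0" using closure_subset by blast
        qed
        have "S0 - U \<in> sigma_sets UNIV E"
          using oS Ub unfolding E_def by (intro sigma_sets.Basic) auto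
        moreover have "\<Union>{b\<in>\<B>. closure b \<subseteq> S0 \<inter> U} \<in> sigma_sets UNIV E"
        proof (rule sigma_sets_UNION)
          show "countable {b \<in> \<B>. closure b \<subseteq> S0 \<inter> U}" using B(1) by simp
          show "b \<in> sigma_sets UNIV E" if "b \<in> {b \<in> \<B>. closure b \<subseteq> S0 \<inter> U}" for b
            using that P(1) unfolding E_def by (intro sigma_sets.Basic) auto
        qed
        ultimately show "S0 \<in> sigma_sets UNIV E" by (subst e) (rule sigma_sets_Un)
      qed
    qed
    show "sets M1 = sigma_sets UNIV E" unfolding M1_def using gen by simp
    show "sets M2 = sigma_sets UNIV E" unfolding M2_def using gen by simp
    show "{b\<in>\<B>. closure b \<subseteq> U} \<union> {- U} \<subseteq> E"
      unfolding E_def using P(1) Ub by auto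
    show "\<Union> ({b\<in>\<B>. closure b \<subseteq> U} \<union> {- U}) = UNIV"
    proof (rule set_eqI, rule iffI)
      fix x :: 'g
      show "x \<in> \<Union> ({b\<in>\<B>. closure b \<subseteq> U} \<union> {- U})"
      proof (cases "x \<in> U")
        case True
        then obtain b where "b \<in> \<B>" "x \<in> b" "closure b \<subseteq> U" using B(3) U(1) by blast
        then show ?thesis by blast
      qed auto
    qed simp
    show "countable ({b\<in>\<B>. closure b \<subseteq> U} \<union> {- U})" using B(1) by simp
    show "emeasure M1 a \<noteq> \<infinity>" if "a \<in> {b\<in>\<B>. closure b \<subseteq> U} \<union> {- U}" for a
    proof (cases "a = - U")
      case True then show ?thesis using MD[of "- U"] Ub by auto
    next
      case False
      then have a: "a \<in> \<B>" "closure a \<subseteq> U" using that by auto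
      then have "emeasure M1 a = emeasure \<nu> (uminus -` a) * emeasure \<mu> A" using M1C P(1) by blast
      moreover have "emeasure \<nu> (uminus -` a) < \<infinity>" using nu_neg_fin B(2) a(1) by blast
      moreover have "emeasure \<mu> A < \<infinity>" by (simp add: less_top[symmetric])
      ultimately have "emeasure M1 a < top" by (simp add: ennreal_mult_less_top)
      then show ?thesis by simp
    qed
  qed
  have muS: "emeasure \<mu> S = k * emeasure \<nu> S" if S: "S \<in> sets \<mu>" for S
  proof -
    have SU: "S \<subseteq> U" and Sb: "S \<in> sets borel" using S sets_mu by auto
    have "emeasure \<mu> S = (\<integral>\<^sup>+h. indicator S h \<partial>\<mu>)" using S by simp
    also have "\<dots> = (\<integral>\<^sup>+h. indicator S h \<partial>mt)" using Sb by (subst int_mt) auto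
    also have "\<dots> = (\<integral>\<^sup>+h. (rho A h * indicator U h) * (indicator S h / rho A h) \<partial>mt)"
    proof (rule nn_integral_cong)
      fix h
      show "indicator S h = (rho A h * indicator U h) * (indicator S h / rho A h)"
        using SU rho_pf[of h] by (auto simp: indicator_def rdiv)
    qed
    also have "\<dots> = (\<integral>\<^sup>+h. indicator S h / rho A h \<partial>M1)"
      unfolding M1_def using Ub rho_m Sb by (subst nn_integral_density) auto
    also have "\<dots> = (\<integral>\<^sup>+h. indicator S h / rho A h \<partial>M2)" by (simp add: M12)
    also have "\<dots> = (\<integral>\<^sup>+h. (k * rho A h * indicator U h) * (indicator S h / rho A h) \<partial>\<nu>)"
      unfolding M2_def using Ub rho_m Sb by (subst nn_integral_density) auto
    also have "\<dots> = (\<integral>\<^sup>+h. k * indicator S h \<partial>\<nu>)"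
    proof (rule nn_integral_cong)
      fix h
      show "(k * rho A h * indicator U h) * (indicator S h / rho A h) = k * indicator S h"
        using SU rho_pf[of h] by (auto simp: indicator_def rdiv mult.assoc)
    qed
    also have "\<dots> = k * emeasure \<nu> S" using Sb by (simp add: nn_integral_cmult_indicator)
    finally show ?thesis .
  qed
  have "emeasure \<mu> U = 1" using mu.emeasure_space_1 space_mu by simp
  then have kU: "k * emeasure \<nu> U = 1" using muS[of U] sets_mu Ub by simp
  have nU0: "emeasure \<nu> U \<noteq> 0" using nu_open[OF U] by simp
  have nUfin: "emeasure \<nu> U \<noteq> \<infinity>"
  proof
    assume "emeasure \<nu> U = \<infinity>"
    with kU have "k * \<infinity> = 1" by simp
    then show False by (cases "k = 0") (simp_all add: ennreal_mult_top)
  qed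
  have "1 / emeasure \<nu> U = (k * emeasure \<nu> U) / emeasure \<nu> U" using kU by simp
  also have "\<dots> = k" using nU0 nUfin mult_divide_eq_ennreal[of "emeasure \<nu> U" k] by simp
  finally have kinv: "1 / emeasure \<nu> U = k" .
  have "\<mu> = scale_measure (1 / emeasure \<nu> U) (restrict_space \<nu> U)"
  proof (rule measure_eqI)
    show "sets \<mu> = sets (scale_measure (1 / emeasure \<nu> U) (restrict_space \<nu> U))"
      using mu(1) sets_restrict_space_cong[OF sets_nu] by simp
    fix S assume S: "S \<in> sets \<mu>"
    then have SU: "S \<subseteq> U" using sets_mu by auto
    have "emeasure (restrict_space \<nu> U) S = emeasure \<nu> S"
      using Ub SU by (intro emeasure_restrict_space) auto
    then show "emeasure \<mu> S = emeasure (scale_measure (1 / emeasure \<nu> U) (restrict_space \<nu> U)) S"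
      using muS[OF S] kinv by simp
  qed
  then show ?thesis using nUfin by (simp add: less_top)
qed

end


locale main = hs \<nu> for \<nu> :: "'g::{topological_group_add, t2_space, second_countable_topology} measure" +
  fixes Z :: "('x::polish_space \<times> 'g) set" and m :: "('x \<times> 'g) measure" and mx :: "'x \<Rightarrow> 'g measure"
  assumes Z_open: "open Z"
    and m_sets: "sets m = sets (restrict_space borel Z)"
    and m_prob: "prob_space m"
    and mx_sets: "\<And>x. x \<in> fst ` Z \<Longrightarrow> sets (mx x) = sets (restrict_space borel (fibre Z x))"
    and mx_prob: "\<And>x. x \<in> fst ` Z \<Longrightarrow> prob_space (mx x)"
    and disint_meas: "\<And>B. B \<in> sets m \<Longrightarrow>
          (\<lambda>x. emeasure (mx x) {h. (x, h) \<in> B}) \<in> borel_measurable (completion (distr m borel fst))"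
    and disint: "\<And>B. B \<in> sets m \<Longrightarrow>
          emeasure m B = (\<integral>\<^sup>+ x. emeasure (mx x) {h. (x, h) \<in> B} \<partial>completion (distr m borel fst))"
    and invariant: "\<And>W g. W \<in> sets m \<Longrightarrow> act g ` W \<subseteq> Z \<Longrightarrow> emeasure m (act g ` W) = emeasure m W"
begin

abbreviation "M0 \<equiv> distr m borel fst"
abbreviation "M1 \<equiv> completion M0"

lemma Zb: "Z \<in> sets borel" using Z_open by auto

lemma space_m: "space m = Z"
  using sets_eq_imp_space_eq[OF m_sets] Zb by simp

lemma sets_m_iff: "S \<in> sets m \<longleftrightarrow> S \<subseteq> Z \<and> S \<in> sets borel"
  unfolding m_sets using Zb by (simp add: sets_restrict_space_iff)

lemma meas_m: "f \<in> measurable borel N \<Longrightarrow> f \<in> measurable m N"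
  unfolding measurable_cong_sets[OF m_sets refl] by (rule measurable_restrict_space1)

lemma fst_meas: "fst \<in> measurable m borel"
  by (rule meas_m, rule borel_measurable_continuous_onI) (intro continuous_intros)

lemma fibre_vimage: "fibre Z x = Pair x -` Z" unfolding fibre_def by auto

lemma fibre_open: "open (fibre Z x)"
  unfolding fibre_vimage by (rule open_vimage[OF Z_open]) (intro continuous_intros)

lemma space_mx: "x \<in> fst ` Z \<Longrightarrow> space (mx x) = fibre Z x"
  using sets_eq_imp_space_eq[OF mx_sets] fibre_open by (simp add: borel_open)

lemma pair_meas: assumes x: "x \<in> fst ` Z" shows "Pair x \<in> measurable (mx x) m"
proof -
  have "Pair x \<in> measurable (borel :: 'g measure) (borel :: ('x \<times> 'g) measure)"
    by (rule borel_measurable_continuous_onI) (intro continuous_intros)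
  then have "Pair x \<in> measurable (restrict_space borel (fibre Z x)) (restrict_space borel Z)"
    by (rule measurable_restrict_space3) (auto simp: fibre_def)
  then show ?thesis unfolding measurable_cong_sets[OF mx_sets[OF x] m_sets] .
qed

lemma sec_meas: "F \<in> borel_measurable m \<Longrightarrow> x \<in> fst ` Z \<Longrightarrow> (\<lambda>h. F (x, h)) \<in> borel_measurable (mx x)"
  using measurable_comp[OF pair_meas] by (auto simp: comp_def)

definition I :: "('x \<times> 'g \<Rightarrow> ennreal) \<Rightarrow> 'x \<Rightarrow> ennreal" where
  "I F x = (\<integral>\<^sup>+h. F (x, h) * indicator Z (x, h) \<partial>mx x)"

lemma I_eq: "I F x = (if x \<in> fst ` Z then (\<integral>\<^sup>+h. F (x, h) \<partial>mx x) else 0)"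
proof (cases "x \<in> fst ` Z")
  case True
  have "I F x = (\<integral>\<^sup>+h. F (x, h) \<partial>mx x)"
    unfolding I_def by (rule nn_integral_cong) (simp add: space_mx[OF True] fibre_def)
  then show ?thesis using True by simp
next
  case False
  then have "\<And>h. (x, h) \<notin> Z" by force
  then show ?thesis unfolding I_def using False by simp
qed

lemma disint_fun:
  assumes F: "F \<in> borel_measurable m"
  shows "I F \<in> borel_measurable M1 \<and> integral\<^sup>N m F = (\<integral>\<^sup>+x. I F x \<partial>M1)"
  using F
proof (induction rule: borel_measurable_induct)
  case (cong f g)
  have "I f = I g"
  proof
    fix x show "I f x = I g x"
      unfolding I_def using \<open>\<And>x. x \<in> space m \<Longrightarrow> f x = g x\<close> space_m by (intro nn_integral_cong) (auto simp: indicator_def)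
  qed
  moreover have "integral\<^sup>N m f = integral\<^sup>N m g"
    using \<open>\<And>x. x \<in> space m \<Longrightarrow> f x = g x\<close> by (intro nn_integral_cong) auto
  ultimately show ?case using \<open>I g \<in> borel_measurable M1 \<and> integral\<^sup>N m g = (\<integral>\<^sup>+x. I g x \<partial>M1)\<close> by simp
next
  case (set A)
  have AZ: "A \<subseteq> Z" using set sets_m_iff by auto
  have eq: "I (indicator A) = (\<lambda>x. emeasure (mx x) {h. (x, h) \<in> A})"
  proof
    fix x show "I (indicator A) x = emeasure (mx x) {h. (x, h) \<in> A}"
    proof (cases "x \<in> fst ` Z")
      case True
      have "Pair x -` A \<inter> space (mx x) \<in> sets (mx x)"
        by (rule measurable_sets[OF pair_meas[OF True] set])
      moreover have "Pair x -` A \<inter> space (mx x) = {h. (x, h) \<in> A}"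
        using AZ True by (auto simp: space_mx fibre_def)
      ultimately have s: "{h. (x, h) \<in> A} \<in> sets (mx x)" by simp
      have "I (indicator A) x = (\<integral>\<^sup>+h. indicator {h. (x, h) \<in> A} h \<partial>mx x)"
        unfolding I_eq using True by (simp add: indicator_def)
      also have "\<dots> = emeasure (mx x) {h. (x, h) \<in> A}" using s by simp
      finally show ?thesis .
    next
      case False
      then have "{h. (x, h) \<in> A} = {}" using AZ by force
      then show ?thesis unfolding I_eq using False by simp
    qed
  qed
  show ?case unfolding eq using disint_meas[OF set] disint[OF set] set by simp
next
  case (mult u c)
  have eq: "I (\<lambda>p. c * u p) = (\<lambda>x. c * I u x)"
  proof
    fix x show "I (\<lambda>p. c * u p) x = c * I u x"
      unfolding I_eq using sec_meas[OF \<open>u \<in> borel_measurable m\<close>] by (simp add: nn_integral_cmult)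
  qed
  note mIH = \<open>I u \<in> borel_measurable M1 \<and> integral\<^sup>N m u = (\<integral>\<^sup>+x. I u x \<partial>M1)\<close>
  have m1: "I u \<in> borel_measurable M1" using mIH by simp
  have "(\<lambda>x. c * I u x) \<in> borel_measurable M1" using m1 by measurable
  moreover have "(\<integral>\<^sup>+p. c * u p \<partial>m) = (\<integral>\<^sup>+x. c * I u x \<partial>M1)"
    using \<open>u \<in> borel_measurable m\<close> mIH m1 by (simp add: nn_integral_cmult)
  ultimately show ?case unfolding eq by simp
next
  case (add u v)
  have eq: "I (\<lambda>p. v p + u p) = (\<lambda>x. I v x + I u x)"
  proof
    fix x show "I (\<lambda>p. v p + u p) x = I v x + I u x"
      unfolding I_eq using sec_meas[OF \<open>u \<in> borel_measurable m\<close>] sec_meas[OF \<open>v \<in> borel_measurable m\<close>] by (simp add: nn_integral_add)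
  qed
  note aIH = \<open>I u \<in> borel_measurable M1 \<and> integral\<^sup>N m u = (\<integral>\<^sup>+x. I u x \<partial>M1)\<close>
    \<open>I v \<in> borel_measurable M1 \<and> integral\<^sup>N m v = (\<integral>\<^sup>+x. I v x \<partial>M1)\<close>
  have m1: "I u \<in> borel_measurable M1" "I v \<in> borel_measurable M1" using aIH by simp_all
  have "(\<lambda>x. I v x + I u x) \<in> borel_measurable M1" using m1 by measurable
  moreover have "(\<integral>\<^sup>+p. v p + u p \<partial>m) = (\<integral>\<^sup>+x. I v x + I u x \<partial>M1)"
    using \<open>u \<in> borel_measurable m\<close> \<open>v \<in> borel_measurable m\<close> aIH m1 by (simp add: nn_integral_add)
  ultimately show ?case unfolding eq by simp
next
  case (seq U)
  have inc: "incseq (\<lambda>i. I (U i))"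
  proof (rule incseq_SucI, rule le_funI)
    fix i x show "I (U i) x \<le> I (U (Suc i)) x"
      unfolding I_def using \<open>incseq U\<close>
      by (intro nn_integral_mono mult_right_mono) (auto simp: incseq_def le_fun_def)
  qed
  have eq: "I (SUP i. U i) = (\<lambda>x. SUP i. I (U i) x)"
  proof
    fix x show "I (SUP i. U i) x = (SUP i. I (U i) x)"
    proof (cases "x \<in> fst ` Z")
      case True
      have "I (SUP i. U i) x = (\<integral>\<^sup>+h. (SUP i. U i (x, h)) \<partial>mx x)"
        unfolding I_eq using True by (simp add: image_comp)
      also have "\<dots> = (SUP i. \<integral>\<^sup>+h. U i (x, h) \<partial>mx x)"
        using \<open>incseq U\<close> sec_meas[OF \<open>\<And>i. U i \<in> borel_measurable m\<close> True]
        by (intro nn_integral_monotone_convergence_SUP) (auto simp: incseq_def le_fun_def)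
      finally show ?thesis unfolding I_eq using True by simp
    qed (simp add: I_eq)
  qed
  have m1: "\<And>i. I (U i) \<in> borel_measurable M1" using \<open>\<And>i. I (U i) \<in> borel_measurable M1 \<and> integral\<^sup>N m (U i) = (\<integral>\<^sup>+x. I (U i) x \<partial>M1)\<close> by simp
  have "(\<lambda>x. SUP i. I (U i) x) \<in> borel_measurable M1" using m1 by measurable
  moreover have "integral\<^sup>N m (SUP i. U i) = (\<integral>\<^sup>+x. (SUP i. I (U i) x) \<partial>M1)"
  proof -
    have "integral\<^sup>N m (SUP i. U i) = (\<integral>\<^sup>+p. (SUP i. U i p) \<partial>m)" by (rule arg_cong[where f="integral\<^sup>N m"], rule ext, simp add: image_comp)
    also have "\<dots> = (SUP i. integral\<^sup>N m (U i))"
      by (rule nn_integral_monotone_convergence_SUP[OF \<open>incseq U\<close> \<open>\<And>i. U i \<in> borel_measurable m\<close>])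
    also have "\<dots> = (SUP i. \<integral>\<^sup>+x. I (U i) x \<partial>M1)" using \<open>\<And>i. I (U i) \<in> borel_measurable M1 \<and> integral\<^sup>N m (U i) = (\<integral>\<^sup>+x. I (U i) x \<partial>M1)\<close> by simp
    also have "\<dots> = (\<integral>\<^sup>+x. (SUP i. I (U i) x) \<partial>M1)"
      by (rule nn_integral_monotone_convergence_SUP[OF inc m1, symmetric])
    finally show ?thesis .
  qed
  ultimately show ?case unfolding eq by (rule conjI)
qed

end


lemma bvim: "f \<in> borel_measurable borel \<Longrightarrow> S \<in> sets borel \<Longrightarrow> f -` S \<in> sets borel"
  using measurable_sets by (metis inf_top.right_neutral space_borel)

lemma borel_measurable_uminus_g[measurable (raw)]:
  fixes f :: "'a \<Rightarrow> 'g::{topological_group_add, second_countable_topology}"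
  shows "f \<in> borel_measurable M \<Longrightarrow> (\<lambda>x. - f x) \<in> borel_measurable M"
  by (rule borel_measurable_continuous_on[where f=uminus]) (intro continuous_intros)

context hs begin
lemma nu_negtransl: assumes C: "C \<in> sets borel" shows "emeasure \<nu> {y. -y + h \<in> C} = emeasure \<nu> (uminus -` C)"
proof -
  have uC: "uminus -` C \<in> sets borel"
    by (rule cont_vimage_borel[OF _ C]) (intro continuous_intros)
  have "{y. -y + h \<in> C} = {y. -h + y \<in> uminus -` C}" by (auto simp: minus_add)
  then show ?thesis using nu_transl[OF uC] by simp
qed
end

context main begin

lemma snd_meas: "snd \<in> measurable m borel"
  by (rule meas_m, rule borel_measurable_continuous_onI) (intro continuous_intros)

lemma mlevel:
  assumes A: "A \<in> sets borel" and C: "C \<in> sets borel" and D: "D \<in> sets borel"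
    and DQ: "\<And>x. x \<in> D \<Longrightarrow> A \<subseteq> fibre Z x \<and> C \<subseteq> fibre Z x"
  shows "(\<integral>\<^sup>+p. indicator D (fst p) * indicator C (snd p) * rho A (snd p) \<partial>m)
      = emeasure \<nu> (uminus -` C) * emeasure m {p\<in>Z. fst p \<in> D \<and> snd p \<in> A}"
proof -
  interpret mp: prob_space m by (rule m_prob)
  interpret P: pair_sigma_finite m \<nu>
    by (simp add: pair_sigma_finite.intro sf_nu mp.sigma_finite_measure_axioms)
  note [measurable] = fst_meas snd_meas A C D
  define E1 where "E1 = {q \<in> space (m \<Otimes>\<^sub>M \<nu>). fst (fst q) \<in> D \<and> snd (fst q) \<in> C \<and> snd q + snd (fst q) \<in> A}"
  define E2 where "E2 = {q \<in> space (m \<Otimes>\<^sub>M \<nu>). fst (fst q) \<in> D \<and> snd (fst q) \<in> A \<and> - snd q + snd (fst q) \<in> C}"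
  have E1: "E1 \<in> sets (m \<Otimes>\<^sub>M \<nu>)" unfolding E1_def by measurable
  have E2: "E2 \<in> sets (m \<Otimes>\<^sub>M \<nu>)" unfolding E2_def by measurable
  have spP: "space (m \<Otimes>\<^sub>M \<nu>) = Z \<times> UNIV" by (simp add: space_pair_measure space_m)
  have "emeasure (m \<Otimes>\<^sub>M \<nu>) E1 = (\<integral>\<^sup>+p. emeasure \<nu> (Pair p -` E1) \<partial>m)"
    by (rule nu.emeasure_pair_measure_alt[OF E1])
  also have "\<dots> = (\<integral>\<^sup>+p. indicator D (fst p) * indicator C (snd p) * rho A (snd p) \<partial>m)"
  proof (rule nn_integral_cong)
    fix p assume "p \<in> space m"
    then have pZ: "p \<in> Z" using space_m by simp
    show "emeasure \<nu> (Pair p -` E1) = indicator D (fst p) * indicator C (snd p) * rho A (snd p)"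
      unfolding E1_def spP rho_def using pZ by (simp add: indicator_def vimage_def)
  qed
  finally have 1: "emeasure (m \<Otimes>\<^sub>M \<nu>) E1 = (\<integral>\<^sup>+p. indicator D (fst p) * indicator C (snd p) * rho A (snd p) \<partial>m)" .
  have "emeasure (m \<Otimes>\<^sub>M \<nu>) E1 = (\<integral>\<^sup>+y. emeasure m ((\<lambda>p. (p, y)) -` E1) \<partial>\<nu>)"
    by (rule P.emeasure_pair_measure_alt2[OF E1])
  also have "\<dots> = (\<integral>\<^sup>+y. emeasure m ((\<lambda>p. (p, y)) -` E2) \<partial>\<nu>)"
  proof (rule nn_integral_cong)
    fix y
    define W where "W = (\<lambda>p. (p, y)) -` E1"
    define W' where "W' = (\<lambda>p. (p, y)) -` E2"
    have Weq: "W = Z \<inter> fst -` D \<inter> snd -` C \<inter> (\<lambda>p. y + snd p) -` A"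
      unfolding W_def E1_def spP by auto
    have W'eq: "W' = Z \<inter> fst -` D \<inter> snd -` A \<inter> (\<lambda>p. - y + snd p) -` C"
      unfolding W'_def E2_def spP by auto
    have b1: "fst -` D \<in> sets (borel :: ('x \<times> 'g) measure)"
      by (rule bvim[OF _ D], rule borel_measurable_continuous_onI) (intro continuous_intros)
    have b2: "snd -` C \<in> sets (borel :: ('x \<times> 'g) measure)"
      by (rule bvim[OF _ C], rule borel_measurable_continuous_onI) (intro continuous_intros)
    have b3: "(\<lambda>p. y + snd p) -` A \<in> sets (borel :: ('x \<times> 'g) measure)"
      by (rule bvim[OF _ A], rule borel_measurable_continuous_onI) (intro continuous_intros)
    have Wm: "W \<in> sets m" unfolding sets_m_iff Weq using Zb b1 b2 b3 by auto
    have act_eq: "act y ` W = W'"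
    proof (rule set_eqI, rule iffI)
      fix q assume "q \<in> act y ` W"
      then obtain p where p: "p \<in> W" "q = act y p" by blast
      have pz: "p \<in> Z" "fst p \<in> D" "snd p \<in> C" "y + snd p \<in> A" using p(1) Weq by auto
      have "(fst p, y + snd p) \<in> Z" using DQ[OF pz(2)] pz(4) by (auto simp: fibre_def)
      then show "q \<in> W'" using pz p(2) unfolding W'eq act_def by (simp add: minus_add_cancel)
    next
      fix q assume "q \<in> W'"
      then have qz: "q \<in> Z" "fst q \<in> D" "snd q \<in> A" "- y + snd q \<in> C" using W'eq by auto
      have "(fst q, - y + snd q) \<in> Z" using DQ[OF qz(2)] qz(4) by (auto simp: fibre_def)
      then have "(fst q, - y + snd q) \<in> W" using qz unfolding Weq by (simp add: add_minus_cancel)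
      moreover have "act y (fst q, - y + snd q) = q" by (simp add: act_def add_minus_cancel)
      ultimately show "q \<in> act y ` W" by (metis image_eqI)
    qed
    have "act y ` W \<subseteq> Z" unfolding act_eq W'eq by blast
    from invariant[OF Wm this] act_eq
    show "emeasure m ((\<lambda>p. (p, y)) -` E1) = emeasure m ((\<lambda>p. (p, y)) -` E2)"
      unfolding W_def W'_def by simp
  qed
  also have "\<dots> = emeasure (m \<Otimes>\<^sub>M \<nu>) E2"
    by (rule P.emeasure_pair_measure_alt2[OF E2, symmetric])
  also have "\<dots> = (\<integral>\<^sup>+p. emeasure \<nu> (Pair p -` E2) \<partial>m)"
    by (rule nu.emeasure_pair_measure_alt[OF E2])
  also have "\<dots> = (\<integral>\<^sup>+p. emeasure \<nu> (uminus -` C) * indicator {p\<in>Z. fst p \<in> D \<and> snd p \<in> A} p \<partial>m)"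
  proof (rule nn_integral_cong)
    fix p assume "p \<in> space m"
    then have pZ: "p \<in> Z" using space_m by simp
    have "Pair p -` E2 = (if fst p \<in> D \<and> snd p \<in> A then {y. - y + snd p \<in> C} else {})"
      unfolding E2_def spP using pZ by auto
    then show "emeasure \<nu> (Pair p -` E2) = emeasure \<nu> (uminus -` C) * indicator {p\<in>Z. fst p \<in> D \<and> snd p \<in> A} p"
      using pZ nu_negtransl[OF C] by (simp add: indicator_def)
  qed
  also have "\<dots> = emeasure \<nu> (uminus -` C) * emeasure m {p\<in>Z. fst p \<in> D \<and> snd p \<in> A}"
  proof (rule nn_integral_cmult_indicator)
    have "{p\<in>Z. fst p \<in> D \<and> snd p \<in> A} = Z \<inter> fst -` D \<inter> snd -` A" by auto
    moreover have "fst -` D \<in> sets (borel :: ('x \<times> 'g) measure)"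
      by (rule bvim[OF _ D], rule borel_measurable_continuous_onI) (intro continuous_intros)
    moreover have "snd -` A \<in> sets (borel :: ('x \<times> 'g) measure)"
      by (rule bvim[OF _ A], rule borel_measurable_continuous_onI) (intro continuous_intros)
    ultimately show "{p\<in>Z. fst p \<in> D \<and> snd p \<in> A} \<in> sets m" unfolding sets_m_iff using Zb by auto
  qed
  finally show ?thesis using 1 by simp
qed

end


context main begin

lemma Q_open:
  assumes "compact K"
  shows "open {x. K \<subseteq> fibre Z x}"
proof (rule Topological_Spaces.openI)
  fix x0 assume "x0 \<in> {x. K \<subseteq> fibre Z x}"
  then have "{x0} \<times> K \<subseteq> Z" by (auto simp: fibre_def)
  from Elementary_Topology.tube_lemma[OF assms Z_open this] obtain X0 where "x0 \<in> X0" "open X0" "X0 \<times> K \<subseteq> Z" by blast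
  then have "X0 \<subseteq> {x. K \<subseteq> fibre Z x}" by (auto simp: fibre_def)
  then show "\<exists>T. open T \<and> x0 \<in> T \<and> T \<subseteq> {x. K \<subseteq> fibre Z x}" using \<open>x0 \<in> X0\<close> \<open>open X0\<close> by blast
qed

lemma ae_key:
  assumes A: "A \<in> sets borel" "compact (closure A)" and C: "C \<in> sets borel" "compact (closure C)"
  shows "AE x in M0. x \<in> {x. closure A \<union> closure C \<subseteq> fibre Z x} \<longrightarrow>
     I (\<lambda>p. indicator C (snd p) * rho A (snd p)) x = emeasure \<nu> (uminus -` C) * emeasure (mx x) {h. (x, h) \<in> {p\<in>Z. snd p \<in> A}}"
proof -
  interpret mp: prob_space m by (rule m_prob)
  interpret M0p: prob_space M0 by (rule mp.prob_space_distr[OF fst_meas])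
  define Q where "Q = {x. closure A \<union> closure C \<subseteq> fibre Z x}"
  have Qo: "open Q" unfolding Q_def by (rule Q_open) (use A C in auto)
  have Qb: "Q \<in> sets borel" using Qo by auto
  note [measurable] = fst_meas snd_meas A(1) C(1)
  define F0 where "F0 = (\<lambda>p::'x \<times> 'g. indicator C (snd p) * rho A (snd p))"
  have F0m: "F0 \<in> borel_measurable m" unfolding F0_def by measurable
  define f where "f = I F0"
  have fm: "f \<in> borel_measurable M1" unfolding f_def using disint_fun[OF F0m] by simp
  define B0 where "B0 = {p\<in>Z. snd p \<in> A}"
  have B0m: "B0 \<in> sets m"
  proof -
    have "snd -` A \<in> sets (borel :: ('x \<times> 'g) measure)"
      by (rule bvim[OF _ A(1)], rule borel_measurable_continuous_onI) (intro continuous_intros)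
    moreover have "B0 = Z \<inter> snd -` A" unfolding B0_def by auto
    ultimately show ?thesis unfolding sets_m_iff using Zb by auto
  qed
  define c where "c = emeasure \<nu> (uminus -` C)"
  define g where "g = (\<lambda>x. c * emeasure (mx x) {h. (x, h) \<in> B0})"
  have gm: "g \<in> borel_measurable M1" unfolding g_def using disint_meas[OF B0m] by measurable
  have eqD: "(\<integral>\<^sup>+x. indicator (D \<inter> Q) x * f x \<partial>M1) = (\<integral>\<^sup>+x. indicator (D \<inter> Q) x * g x \<partial>M1)"
    if D: "D \<in> sets borel" for D
  proof -
    define D' where "D' = D \<inter> Q"
    have D'b: "D' \<in> sets borel" unfolding D'_def using D Qb by auto
    note [measurable] = D'b
    define F where "F = (\<lambda>p. indicator D' (fst p) * F0 p)"
    have Fm: "F \<in> borel_measurable m" unfolding F_def using F0m by measurable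
    have IF: "I F = (\<lambda>x. indicator D' x * f x)"
    proof
      fix x show "I F x = indicator D' x * f x"
        unfolding F_def f_def I_eq using sec_meas[OF F0m] by (simp add: nn_integral_cmult)
    qed
    have "(\<integral>\<^sup>+x. indicator D' x * f x \<partial>M1) = integral\<^sup>N m F"
      using disint_fun[OF Fm] IF by simp
    also have "\<dots> = (\<integral>\<^sup>+p. indicator D' (fst p) * indicator C (snd p) * rho A (snd p) \<partial>m)"
      unfolding F_def F0_def by (simp add: mult.assoc)
    also have "\<dots> = c * emeasure m {p\<in>Z. fst p \<in> D' \<and> snd p \<in> A}"
      unfolding c_def
    proof (rule mlevel[OF A(1) C(1) D'b])
      fix x assume "x \<in> D'"
      then have "closure A \<union> closure C \<subseteq> fibre Z x" unfolding D'_def Q_def by auto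
      then show "A \<subseteq> fibre Z x \<and> C \<subseteq> fibre Z x" using closure_subset[of A] closure_subset[of C] by blast
    qed
    also have "emeasure m {p\<in>Z. fst p \<in> D' \<and> snd p \<in> A} = (\<integral>\<^sup>+x. indicator D' x * emeasure (mx x) {h. (x, h) \<in> B0} \<partial>M1)"
    proof -
      have "{p\<in>Z. fst p \<in> D' \<and> snd p \<in> A} = B0 \<inter> fst -` D'" unfolding B0_def by auto
      moreover have "fst -` D' \<in> sets (borel :: ('x \<times> 'g) measure)"
        by (rule bvim[OF _ D'b], rule borel_measurable_continuous_onI) (intro continuous_intros)
      ultimately have Bm: "{p\<in>Z. fst p \<in> D' \<and> snd p \<in> A} \<in> sets m"
        using B0m unfolding sets_m_iff by auto
      show ?thesis unfolding disint[OF Bm]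
        by (rule nn_integral_cong) (auto simp: indicator_def B0_def)
    qed
    also have "c * \<dots> = (\<integral>\<^sup>+x. indicator D' x * g x \<partial>M1)"
    proof -
      have D'1: "D' \<in> sets M1" using D'b by (intro sets_completionI_sets) simp
      have mm: "(\<lambda>x. emeasure (mx x) {h. (x, h) \<in> B0}) \<in> borel_measurable M1" by (rule disint_meas[OF B0m])
      have "(\<lambda>x. indicator D' x * emeasure (mx x) {h. (x, h) \<in> B0}) \<in> borel_measurable M1"
        using mm D'1 by measurable
      then show ?thesis unfolding g_def
        by (subst nn_integral_cmult[symmetric]) (auto simp: ac_simps)
    qed
    finally show ?thesis unfolding D'_def .
  qed
  obtain f' where f': "f' \<in> borel_measurable M0" "AE x in M0. f x = f' x"
    using completion_ex_borel_measurable[OF fm] by blast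
  obtain g' where g': "g' \<in> borel_measurable M0" "AE x in M0. g x = g' x"
    using completion_ex_borel_measurable[OF gm] by blast
  have "AE x in M0. f' x * indicator Q x = g' x * indicator Q x"
  proof (rule M0p.density_unique2)
    show "(\<lambda>x. f' x * indicator Q x) \<in> borel_measurable M0" using f'(1) Qb by measurable
    show "(\<lambda>x. g' x * indicator Q x) \<in> borel_measurable M0" using g'(1) Qb by measurable
    fix D assume D: "D \<in> sets M0"
    then have Db: "D \<in> sets borel" by simp
    have "(\<integral>\<^sup>+x\<in>D. f' x * indicator Q x \<partial>M0) = (\<integral>\<^sup>+x. indicator (D \<inter> Q) x * f x \<partial>M0)"
      using f'(2) by (intro nn_integral_cong_AE) (auto simp: indicator_def)
    also have "\<dots> = (\<integral>\<^sup>+x. indicator (D \<inter> Q) x * f x \<partial>M1)" by (simp add: nn_integral_completion)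
    also have "\<dots> = (\<integral>\<^sup>+x. indicator (D \<inter> Q) x * g x \<partial>M1)" by (rule eqD[OF Db])
    also have "\<dots> = (\<integral>\<^sup>+x. indicator (D \<inter> Q) x * g x \<partial>M0)" by (simp add: nn_integral_completion)
    also have "\<dots> = (\<integral>\<^sup>+x\<in>D. g' x * indicator Q x \<partial>M0)"
      using g'(2) by (intro nn_integral_cong_AE) (auto simp: indicator_def)
    finally show "(\<integral>\<^sup>+x\<in>D. f' x * indicator Q x \<partial>M0) = (\<integral>\<^sup>+x\<in>D. g' x * indicator Q x \<partial>M0)" .
  qed
  then show ?thesis using f'(2) g'(2)
    by eventually_elim (auto simp: Q_def f_def F0_def g_def c_def B0_def indicator_def split: if_splits)
qed

end


context main begin

lemma final:
  "AE x in M0. emeasure \<nu> (fibre Z x) < \<infinity> \<and>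
     mx x = scale_measure (1 / emeasure \<nu> (fibre Z x)) (restrict_space \<nu> (fibre Z x))"
proof -
  obtain \<B> :: "'g set set" where B: "countable \<B>" "\<forall>b\<in>\<B>. open b \<and> b \<noteq> {} \<and> compact (closure b)"
     "\<forall>S0 p. open S0 \<and> p \<in> S0 \<longrightarrow> (\<exists>b\<in>\<B>. p \<in> b \<and> closure b \<subseteq> S0)"
    using good_basis[OF lie] by blast
  define \<P> where "\<P> = (\<lambda>F. \<Inter>F) ` {F. finite F \<and> F \<subseteq> \<B> \<and> F \<noteq> {}}"
  have Pc: "countable \<P>"
  proof -
    have "countable {F. finite F \<and> F \<subseteq> \<B>}" by (rule countable_Collect_finite_subset[OF B(1)])
    then have "countable {F. finite F \<and> F \<subseteq> \<B> \<and> F \<noteq> {}}" by (rule countable_subset[rotated]) blast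
    then show ?thesis unfolding \<P>_def by (rule countable_image)
  qed
  have BP: "\<B> \<subseteq> \<P>"
  proof
    fix b assume "b \<in> \<B>"
    then have "{b} \<in> {F. finite F \<and> F \<subseteq> \<B> \<and> F \<noteq> {}}" by simp
    then show "b \<in> \<P>" unfolding \<P>_def by (rule image_eqI[rotated]) simp
  qed
  have Pprop: "\<forall>C\<in>\<P>. C \<in> sets borel \<and> compact (closure C)"
  proof
    fix C assume "C \<in> \<P>"
    then obtain F where F: "finite F" "F \<subseteq> \<B>" "F \<noteq> {}" "C = \<Inter>F" unfolding \<P>_def by blast
    have "open C" unfolding F(4) using F(1,2) B(2) by (intro open_Inter) auto
    moreover obtain b where b: "b \<in> F" using F(3) by blast
    have "closure C \<subseteq> closure b" using b F(4) by (intro closure_mono) blast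
    then have e: "closure C = closure b \<inter> closure C" by blast
    have "compact (closure C)"
      using b F(2) B(2) by (subst e, intro compact_Int_closed) auto
    ultimately show "C \<in> sets borel \<and> compact (closure C)" by auto
  qed
  have Pint: "\<forall>C D. C \<in> \<P> \<longrightarrow> D \<in> \<P> \<longrightarrow> C \<inter> D \<in> \<P>"
  proof (intro allI impI)
    fix C D assume "C \<in> \<P>" "D \<in> \<P>"
    then obtain F G where F: "finite F" "F \<subseteq> \<B>" "F \<noteq> {}" "C = \<Inter>F"
      and G: "finite G" "G \<subseteq> \<B>" "G \<noteq> {}" "D = \<Inter>G" unfolding \<P>_def by blast
    have "C \<inter> D = \<Inter>(F \<union> G)" using F(4) G(4) by auto
    moreover have "F \<union> G \<in> {F. finite F \<and> F \<subseteq> \<B> \<and> F \<noteq> {}}" using F G by auto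
    ultimately show "C \<inter> D \<in> \<P>" unfolding \<P>_def by blast
  qed
  define P where "P = (\<lambda>AC x. x \<in> {x. closure (fst AC) \<union> closure (snd AC) \<subseteq> fibre Z x} \<longrightarrow>
     I (\<lambda>p. indicator (snd AC) (snd p) * rho (fst AC) (snd p)) x =
       emeasure \<nu> (uminus -` (snd AC)) * emeasure (mx x) {h. (x, h) \<in> {p\<in>Z. snd p \<in> fst AC}})"
  have AE1: "AE x in M0. \<forall>AC \<in> \<B> \<times> \<P>. P AC x"
  proof (rule AE_ball_countable')
    show "countable (\<B> \<times> \<P>)" using B(1) Pc by simp
    fix AC assume "AC \<in> \<B> \<times> \<P>"
    then have "fst AC \<in> \<B>" "snd AC \<in> \<P>" by auto
    then have "fst AC \<in> sets borel" "compact (closure (fst AC))" "snd AC \<in> sets borel" "compact (closure (snd AC))"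
      using B(2) Pprop by auto
    from ae_key[OF this] show "AE x in M0. P AC x" unfolding P_def .
  qed
  have AE2: "AE x in M0. x \<in> fst ` Z"
  proof -
    have "fst ` Z \<in> sets borel" using open_image_fst[OF Z_open] by auto
    then have "{x \<in> space borel. x \<in> fst ` Z} \<in> sets borel" by simp
    then have "(AE x in M0. x \<in> fst ` Z) \<longleftrightarrow> (AE p in m. fst p \<in> fst ` Z)"
      by (rule AE_distr_iff[OF fst_meas])
    moreover have "AE p in m. fst p \<in> fst ` Z" using space_m by (intro AE_I2) auto
    ultimately show ?thesis by simp
  qed
  show ?thesis using AE1 AE2
  proof eventually_elim
    case (elim x)
    then have xZ: "x \<in> fst ` Z" by simp
    have Uo: "open (fibre Z x)" by (rule fibre_open)
    have Un: "fibre Z x \<noteq> {}" using xZ by (force simp: fibre_def)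
    have key: "\<forall>A\<in>\<B>. \<forall>C\<in>\<P>. closure A \<subseteq> fibre Z x \<longrightarrow> closure C \<subseteq> fibre Z x \<longrightarrow>
        (\<integral>\<^sup>+h. indicator C h * rho A h \<partial>mx x) = emeasure \<nu> (uminus -` C) * emeasure (mx x) A"
    proof (intro ballI impI)
      fix A C assume AC: "A \<in> \<B>" "C \<in> \<P>" "closure A \<subseteq> fibre Z x" "closure C \<subseteq> fibre Z x"
      have "P (A, C) x" using elim(1) AC(1,2) by blast
      then have e: "I (\<lambda>p. indicator C (snd p) * rho A (snd p)) x =
       emeasure \<nu> (uminus -` C) * emeasure (mx x) {h. (x, h) \<in> {p\<in>Z. snd p \<in> A}}"
        unfolding P_def using AC(3,4) by simp
      have "{h. (x, h) \<in> {p\<in>Z. snd p \<in> A}} = A"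
        using AC(3) closure_subset[of A] by (auto simp: fibre_def)
      then show "(\<integral>\<^sup>+h. indicator C h * rho A h \<partial>mx x) = emeasure \<nu> (uminus -` C) * emeasure (mx x) A"
        using e xZ unfolding I_eq by simp
    qed
    show ?case
      by (rule pw[OF B(1) B(2) B(3) BP Pprop Pint Uo Un mx_sets[OF xZ] mx_prob[OF xZ] key])
  qed
qed

end

theorem proposition2p6:
  fixes \<nu> :: "'g::{topological_group_add, t2_space, second_countable_topology} measure"
    and Z :: "('x::polish_space \<times> 'g) set"
    and m :: "('x \<times> 'g) measure"
    and mx :: "'x \<Rightarrow> 'g measure"
  assumes lie: "locally_euclidean_group TYPE('g)"
    and haar: "left_haar_measure \<nu>"
    and Z_open: "open Z" and Z_ne: "Z \<noteq> {}"
    and m_sets: "sets m = sets (restrict_space borel Z)"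
    and m_prob: "prob_space m"
    and mx_sets: "\<And>x. x \<in> fst ` Z \<Longrightarrow> sets (mx x) = sets (restrict_space borel (fibre Z x))"
    and mx_prob: "\<And>x. x \<in> fst ` Z \<Longrightarrow> prob_space (mx x)"
    and disint_meas: "\<And>B. B \<in> sets m \<Longrightarrow>
          (\<lambda>x. emeasure (mx x) {h. (x, h) \<in> B}) \<in> borel_measurable (completion (distr m borel fst))"
    and disint: "\<And>B. B \<in> sets m \<Longrightarrow>
          emeasure m B = (\<integral>\<^sup>+ x. emeasure (mx x) {h. (x, h) \<in> B} \<partial>completion (distr m borel fst))"
    and invariant: "\<And>W g. W \<in> sets m \<Longrightarrow> act g ` W \<subseteq> Z \<Longrightarrow> emeasure m (act g ` W) = emeasure m W"
  shows "AE x in distr m borel fst.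
           emeasure \<nu> (fibre Z x) < \<infinity> \<and>
           mx x = scale_measure (1 / emeasure \<nu> (fibre Z x)) (restrict_space \<nu> (fibre Z x))"
  proof -
  have M: "main \<nu> Z m mx"
    by (rule main.intro[OF hs.intro[OF lie haar] main_axioms.intro[OF Z_open m_sets m_prob mx_sets mx_prob disint_meas disint invariant]])
  interpret main \<nu> Z m mx by (rule M)
  show ?thesis by (rule final)
qed

end
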